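(* Let $n\ge 2$ and $k\neq 0$ be integers, $\zeta=2\pi/n$, $s_1>0$, $\nu>0$. Let $u_n:\mathbb{R}\to\mathbb{C}$ be $2\pi$-periodic, define $u_j(t)=e^{ij\zeta}u_n(t+jk\zeta)$ and $q_j(t)=e^{it\sqrt{s_1}/\nu}u_j(t)$ for all integers $j$, and let $\Omega=\frac{1}{n}\left(k\frac{\sqrt{s_1}}{\nu}-1\right)$. Suppose $\Omega=p/q$ with $p,q$ integers, $q\ge1$, and $\gcd(q,n)=1$. Let $q^*$ be an integer with $qq^*\equiv 1 \pmod n$ and set $1_n=q^*q$ (so $1_n\equiv 1\pmod n$). Then for every integer $j$ and all $t$, $$q_j(t)=q_n\big(t+j\,1_n k\zeta\big).$$ Moreover, writing $\frac{np+q}{kq}=\frac{\ell}{m}$ with $\ell,m$ relatively prime integers and $m\ge1$, the function $q_n$ is $2\pi m$-periodic.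
   Context: Setting: $n$ unit masses in a frame rotating with angular frequency $\sqrt{s_1}$, $s_1=\frac14\sum_{j=1}^{n-1}\frac{\sin^2(j\zeta/2)}{\sin^3(j\zeta/2)}$; a planar Lyapunov orbit of frequency $\nu$, rescaled to period $2\pi$, has the symmetry $u_j(t)=e^{ij\zeta}u_n(t+jk\zeta)$, and $q_j$ are the inertial-frame positions (time rescaled by $\nu$). Note that $\sqrt{s_1}/\nu=(n\Omega+1)/k$. *)

theory Defs
  imports "HOL-Analysis.Analysis" "HOL-Number_Theory.Cong"
begin

definition zeta :: "int \<Rightarrow> real" where
  "zeta n = 2 * pi / of_int n"

definition u_sym :: "(real \<Rightarrow> complex) \<Rightarrow> int \<Rightarrow> int \<Rightarrow> int \<Rightarrow> real \<Rightarrow> complex" where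
  "u_sym un n k j t = exp (\<i> * complex_of_real (of_int j * zeta n))
                       * un (t + of_int j * of_int k * zeta n)"

definition q_pos :: "(real \<Rightarrow> complex) \<Rightarrow> int \<Rightarrow> int \<Rightarrow> real \<Rightarrow> real \<Rightarrow> int \<Rightarrow> real \<Rightarrow> complex" where
  "q_pos un n k s1 \<nu> j t = exp (\<i> * complex_of_real (t * sqrt s1 / \<nu>)) * u_sym un n k j t"

end

theory Submission
  imports Defs
begin

lemma per_int:
  assumes "\<And>t. un (t + 2 * pi) = un t"
  shows "un (t + 2 * pi * of_int z) = (un t :: complex)"
proof (induction z arbitrary: t rule: int_induct[where k=0])
  case base then show ?case by simp
next
  case (step1 i)
  have "un (t + 2 * pi * of_int (i+1)) = un ((t + 2 * pi * of_int i) + 2*pi)"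
    by (simp add: algebra_simps)
  also have "\<dots> = un t" using assms step1 by simp
  finally show ?case .
next
  case (step2 i)
  have "un (t + 2 * pi * of_int (i-1)) = un ((t + 2 * pi * of_int (i-1)) + 2*pi)"
    using assms by simp
  also have "\<dots> = un (t + 2 * pi * of_int i)" by (simp add: algebra_simps)
  also have "\<dots> = un t" using step2 by simp
  finally show ?case .
qed

lemma exp_shift:
  assumes "x = y + 2 * pi * of_int z"
  shows "exp (\<i> * complex_of_real x) = exp (\<i> * complex_of_real y)"
proof -
  have "exp (\<i> * complex_of_real x) = exp (\<i> * complex_of_real y) * exp ((2 * of_int z * pi) * \<i>)"
    unfolding assms by (simp add: exp_add[symmetric] algebra_simps)
  also have "exp ((2 * of_int z * pi) * \<i>) = 1"
    by (rule exp_integer_2pi) simp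
  finally show ?thesis by simp
qed

theorem proposition1:
  fixes n k p q qs :: int and s1 \<nu> :: real and un :: "real \<Rightarrow> complex"
  assumes "n \<ge> 2" and "k \<noteq> 0" and "s1 > 0" and "\<nu> > 0"
    and "\<And>t. un (t + 2 * pi) = un t"
    and "(1 / of_int n) * (of_int k * sqrt s1 / \<nu> - 1) = of_int p / of_int q"
    and "q \<ge> 1" and "gcd q n = 1"
    and "[q * qs = 1] (mod n)"
  shows "(\<forall>j t. q_pos un n k s1 \<nu> j t
                 = q_pos un n k s1 \<nu> n (t + of_int j * of_int (qs * q) * of_int k * zeta n))
       \<and> (\<forall>l m :: int. coprime l m \<and> m \<ge> 1
              \<and> of_int (n * p + q) / of_int (k * q) = (of_int l / of_int m :: real)
            \<longrightarrow> (\<forall>t. q_pos un n k s1 \<nu> n (t + 2 * pi * of_int m) = q_pos un n k s1 \<nu> n t))"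
proof -
  define W where "W = sqrt s1 / \<nu>"
  define Z where "Z = zeta n"
  have qp: "q_pos un n k s1 \<nu> j t = exp (\<i> * complex_of_real (t * W)) * exp (\<i> * complex_of_real (of_int j * Z)) * un (t + of_int j * of_int k * Z)" for j t
    by (simp add: q_pos_def u_sym_def W_def Z_def)
  have nZ: "real_of_int n * Z = 2 * pi" using assms(1) by (simp add: Z_def zeta_def)
  have qpos: "real_of_int q > 0" using assms(7) by simp
  have npos: "real_of_int n > 0" using assms(1) by simp
  have kW: "of_int k * W = (of_int n * of_int p + of_int q) / of_int q"
    using assms(6) qpos npos unfolding W_def by (simp add: field_simps)
  obtain k0 where k0: "1 = q * qs + n * k0" using assms(9) by (auto simp: cong_iff_lin)
  have expn: "exp (\<i> * complex_of_real (of_int n * Z)) = 1"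
    unfolding nZ using exp_integer_2pi[of 1] by (simp add: mult.commute)
  have P1: "q_pos un n k s1 \<nu> j t
                 = q_pos un n k s1 \<nu> n (t + of_int j * of_int (qs * q) * of_int k * zeta n)" for j t
  proof -
    have c: "real_of_int (qs * q) = 1 - of_int n * of_int k0"
      using arg_cong[OF k0, of real_of_int] by (simp add: algebra_simps)
    have ckW: "of_int (qs*q) * of_int k * W = of_int qs * (of_int n * of_int p + of_int q)"
    proof -
      have e: "of_int k * W * of_int q = of_int n * of_int p + of_int q"
        using kW qpos by (simp add: field_simps)
      have "of_int (qs*q) * of_int k * W = of_int qs * (of_int k * W * of_int q)"
        by (simp add: algebra_simps)
      then show ?thesis unfolding e .
    qed
    have A: "un (t + of_int j * of_int (qs * q) * of_int k * Z + of_int n * of_int k * Z)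
           = un (t + of_int j * of_int k * Z)"
    proof -
      have "t + of_int j * of_int (qs * q) * of_int k * Z + of_int n * of_int k * Z
          = (t + of_int j * of_int k * Z) + 2 * pi * of_int (k - j * k * k0)"
        using nZ unfolding c by (simp add: algebra_simps) (metis mult.assoc mult.left_commute)
      then show ?thesis by (simp only:) (rule per_int[of un, OF assms(5)])
    qed
    have B: "exp (\<i> * complex_of_real ((t + of_int j * of_int (qs * q) * of_int k * Z) * W))
           = exp (\<i> * complex_of_real (t * W + of_int j * Z))"
    proof (rule exp_shift[where z = "j * qs * p - j * k0"])
      have "(t + of_int j * of_int (qs * q) * of_int k * Z) * W
          = t * W + of_int j * Z * (of_int (qs*q) * of_int k * W)" by (simp add: algebra_simps)
      also have "\<dots> = t * W + of_int j * Z * (of_int qs * of_int n * of_int p + of_int (qs*q))"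
        unfolding ckW by (simp add: algebra_simps)
      also have "\<dots> = t * W + of_int j * Z + of_int j * (of_int n * Z) * (of_int qs * of_int p - of_int k0)"
        unfolding c by (simp add: algebra_simps)
      also have "\<dots> = t * W + of_int j * Z + 2 * pi * of_int (j * qs * p - j * k0)"
        unfolding nZ by (simp add: algebra_simps)
      finally show "(t + of_int j * of_int (qs * q) * of_int k * Z) * W
          = t * W + of_int j * Z + 2 * pi * of_int (j * qs * p - j * k0)" .
    qed
    show ?thesis
      unfolding Z_def[symmetric] qp A B expn
      by (simp add: exp_add[symmetric] algebra_simps)
  qed
  have P2: "q_pos un n k s1 \<nu> n (t + 2 * pi * of_int m) = q_pos un n k s1 \<nu> n t"
    if h: "of_int (n * p + q) / of_int (k * q) = (of_int l / of_int m :: real)" "m \<ge> 1" for l m t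
  proof -
    have W': "W = of_int l / of_int m"
    proof -
      have kq: "real_of_int k * real_of_int q \<noteq> 0" using assms(2) qpos by simp
      have "W * (of_int k * of_int q) = of_int n * of_int p + of_int q"
        using kW qpos by (simp add: field_simps)
      also have "\<dots> = (of_int l / of_int m) * (of_int k * of_int q)"
        using h(1) kq by (simp add: field_simps)
      finally show ?thesis using kq mult_right_cancel by blast
    qed
    have mW: "of_int m * W = of_int l" using h(2) unfolding W' by simp
    have B: "exp (\<i> * complex_of_real ((t + 2 * pi * of_int m) * W))
           = exp (\<i> * complex_of_real (t * W))"
      by (rule exp_shift[where z = l]) (simp add: algebra_simps mW[symmetric])
    have A: "un (t + 2 * pi * of_int m + of_int n * of_int k * Z) = un t"
    proof -
      have "t + 2 * pi * of_int m + of_int n * of_int k * Z = t + 2 * pi * of_int (m + k)"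
        using nZ by (simp add: algebra_simps)
      then show ?thesis by (simp only:) (rule per_int[of un, OF assms(5)])
    qed
    have A2: "un (t + of_int n * of_int k * Z) = un t"
    proof -
      have "t + of_int n * of_int k * Z = t + 2 * pi * of_int k"
        using nZ by (simp add: algebra_simps)
      then show ?thesis by (simp only:) (rule per_int[of un, OF assms(5)])
    qed
    show ?thesis
      unfolding qp A A2 B expn by simp
  qed
  show ?thesis using P1 P2 by blast
qed

end
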